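(* Let \[ \mathfrak m=\left\{\begin{pmatrix} 0 & 0 & 0 & 0 & 0 & 0 & 0\\ u_1 & 0 & 0 & 0 & 0 & 0 & 0\\ u_2 & u_3 & 0 & 0 & 0 & 0 & 0\\ u_4 & 4u_2 & -4u_1 & 0 & 0 & 0 & 0\\ u_5 & -2u_4 & 0 & 4u_1 & 0 & 0 & 0\\ u_6 & 0 & 2u_4 & -4u_2 & -u_3 & 0 & 0\\ 0 & -u_6 & -u_5 & -u_4 & -u_2 & -u_1 & 0 \end{pmatrix} \;:\; u_1,\dots,u_6\in\mathbb R\right\}, \] a maximal nilpotent subalgebra of $\mathfrak g_{2(2)}$. Then $\mathfrak m$ does not contain a three-dimensional Lie subalgebra $\mathfrak b$ all of whose non-zero elements are matrices of rank two.
   Context: $\mathfrak g_{2(2)}$ is the Lie algebra of the split real form $\mathrm G_{2(2)}$ of $\mathrm G_2^{\mathbb C}$, realized (in a suitable Witt basis) as a subalgebra of $\mathfrak{so}_{4,3}$; $\mathfrak m$ is the set of strictly lower triangular matrices in this realization. *)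

theory Defs
  imports "HOL-Analysis.Analysis" "HOL-Library.Numeral_Type"
begin

text \<open>Rows/columns indexed by type 7 with elements 0,...,6 (index k here = row/column k+1
of the paper).\<close>

definition mmat :: "real \<Rightarrow> real \<Rightarrow> real \<Rightarrow> real \<Rightarrow> real \<Rightarrow> real \<Rightarrow> real^7^7" where
  "mmat u1 u2 u3 u4 u5 u6 = (\<chi> (i::7) (j::7).
     if (i,j) = (1,0) then u1
     else if (i,j) = (2,0) then u2
     else if (i,j) = (2,1) then u3
     else if (i,j) = (3,0) then u4
     else if (i,j) = (3,1) then 4*u2
     else if (i,j) = (3,2) then -4*u1
     else if (i,j) = (4,0) then u5
     else if (i,j) = (4,1) then -2*u4
     else if (i,j) = (4,3) then 4*u1
     else if (i,j) = (5,0) then u6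
     else if (i,j) = (5,2) then 2*u4
     else if (i,j) = (5,3) then -4*u2
     else if (i,j) = (5,4) then -u3
     else if (i,j) = (6,1) then -u6
     else if (i,j) = (6,2) then -u5
     else if (i,j) = (6,3) then -u4
     else if (i,j) = (6,4) then -u2
     else if (i,j) = (6,5) then -u1
     else 0)"

definition g2_m :: "(real^7^7) set" where
  "g2_m = {mmat u1 u2 u3 u4 u5 u6 | u1 u2 u3 u4 u5 u6. True}"

definition is_lie_subalgebra :: "(real^'n^'n) set \<Rightarrow> bool" where
  "is_lie_subalgebra B \<longleftrightarrow> subspace B \<and> (\<forall>X\<in>B. \<forall>Y\<in>B. X ** Y - Y ** X \<in> B)"

end

theory Submission
  imports Defs
begin
definition cone :: "real \<Rightarrow> real \<Rightarrow> real \<Rightarrow> real \<Rightarrow> bool" where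
 "cone a b c d \<longleftrightarrow> 4*a^2 = b*c \<and> c^2 + 2*a*d = 0 \<and> b*d + 2*a*c = 0"
lemma alg: fixes a b c d x y z w :: real
  assumes "cone a b c d" "cone x y z w" "cone (a+x) (b+y) (c+z) (d+w)"
  shows "a*y = b*x" "a*z = c*x" "a*w = d*x" "b*z = c*y" "b*w = d*y" "c*w = d*z"
  using assms unfolding cone_def by algebra+

definition det3 :: "real \<Rightarrow> real \<Rightarrow> real \<Rightarrow> real \<Rightarrow> real \<Rightarrow> real \<Rightarrow> real \<Rightarrow> real \<Rightarrow> real \<Rightarrow> real" where
 "det3 a b c d e f g h i = a*(e*i - f*h) - b*(d*i - f*g) + c*(d*h - e*g)"

lemma minor_zero:
  fixes X :: "real^'n^'m"
  assumes "rank X \<le> 2"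
  shows "det3 (X$i1$j1) (X$i1$j2) (X$i1$j3) (X$i2$j1) (X$i2$j2) (X$i2$j3) (X$i3$j1) (X$i3$j2) (X$i3$j3) = 0"
proof (rule ccontr)
  let ?D = "det3 (X$i1$j1) (X$i1$j2) (X$i1$j3) (X$i2$j1) (X$i2$j2) (X$i2$j3) (X$i3$j1) (X$i3$j2) (X$i3$j3)"
  assume D: "?D \<noteq> 0"
  define c1 where "c1 = X *v axis j1 1"
  define c2 where "c2 = X *v axis j2 1"
  define c3 where "c3 = X *v axis j3 1"
  have comp: "c1$i = X$i$j1" "c2$i = X$i$j2" "c3$i = X$i$j3" for i
    by (simp_all add: c1_def c2_def c3_def matrix_vector_mult_basis column_def)
  have H: "a = 0 \<and> b = 0 \<and> c = 0" if "a *\<^sub>R c1 + b *\<^sub>R c2 + c *\<^sub>R c3 = 0" for a b c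
  proof -
    have e: "a * X$i$j1 + b * X$i$j2 + c * X$i$j3 = 0" for i
      using arg_cong[OF that, of "\<lambda>v. v$i"] by (simp add: comp)
    have "a * ?D = 0" "b * ?D = 0" "c * ?D = 0"
      using e[of i1] e[of i2] e[of i3] unfolding det3_def by algebra+
    with D show ?thesis by simp
  qed
  have d12: "c1 \<noteq> c2" using H[of 1 "-1" 0] by auto
  have d13: "c1 \<noteq> c3" using H[of 1 0 "-1"] by auto
  have d23: "c2 \<noteq> c3" using H[of 0 1 "-1"] by auto
  have ind: "independent {c1,c2,c3}"
  proof
    assume "dependent {c1,c2,c3}"
    then obtain u where u: "\<exists>v\<in>{c1,c2,c3}. u v \<noteq> 0" "(\<Sum>v\<in>{c1,c2,c3}. u v *\<^sub>R v) = 0"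
      using dependent_finite[of "{c1,c2,c3}"] by auto
    have "u c1 *\<^sub>R c1 + u c2 *\<^sub>R c2 + u c3 *\<^sub>R c3 = 0"
      using u(2) d12 d13 d23 by (simp add: add.assoc)
    from H[OF this] u(1) show False by auto
  qed
  have "{c1,c2,c3} \<subseteq> range (\<lambda>x. X *v x)" by (auto simp: c1_def c2_def c3_def)
  from independent_card_le_dim[OF this ind] have "card {c1,c2,c3} \<le> rank X"
    by (simp add: rank_dim_range)
  moreover have "card {c1,c2,c3} = 3" using d12 d13 d23 by simp
  ultimately show False using assms by simp
qed

lemma mm:
  "(mmat u1 u2 u3 u4 u5 u6)$0$0 = 0"
  "(mmat u1 u2 u3 u4 u5 u6)$0$1 = 0"
  "(mmat u1 u2 u3 u4 u5 u6)$0$2 = 0"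
  "(mmat u1 u2 u3 u4 u5 u6)$0$3 = 0"
  "(mmat u1 u2 u3 u4 u5 u6)$0$4 = 0"
  "(mmat u1 u2 u3 u4 u5 u6)$0$5 = 0"
  "(mmat u1 u2 u3 u4 u5 u6)$0$6 = 0"
  "(mmat u1 u2 u3 u4 u5 u6)$1$0 = u1"
  "(mmat u1 u2 u3 u4 u5 u6)$1$1 = 0"
  "(mmat u1 u2 u3 u4 u5 u6)$1$2 = 0"
  "(mmat u1 u2 u3 u4 u5 u6)$1$3 = 0"
  "(mmat u1 u2 u3 u4 u5 u6)$1$4 = 0"
  "(mmat u1 u2 u3 u4 u5 u6)$1$5 = 0"
  "(mmat u1 u2 u3 u4 u5 u6)$1$6 = 0"
  "(mmat u1 u2 u3 u4 u5 u6)$2$0 = u2"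
  "(mmat u1 u2 u3 u4 u5 u6)$2$1 = u3"
  "(mmat u1 u2 u3 u4 u5 u6)$2$2 = 0"
  "(mmat u1 u2 u3 u4 u5 u6)$2$3 = 0"
  "(mmat u1 u2 u3 u4 u5 u6)$2$4 = 0"
  "(mmat u1 u2 u3 u4 u5 u6)$2$5 = 0"
  "(mmat u1 u2 u3 u4 u5 u6)$2$6 = 0"
  "(mmat u1 u2 u3 u4 u5 u6)$3$0 = u4"
  "(mmat u1 u2 u3 u4 u5 u6)$3$1 = 4*u2"
  "(mmat u1 u2 u3 u4 u5 u6)$3$2 = -4*u1"
  "(mmat u1 u2 u3 u4 u5 u6)$3$3 = 0"
  "(mmat u1 u2 u3 u4 u5 u6)$3$4 = 0"
  "(mmat u1 u2 u3 u4 u5 u6)$3$5 = 0"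
  "(mmat u1 u2 u3 u4 u5 u6)$3$6 = 0"
  "(mmat u1 u2 u3 u4 u5 u6)$4$0 = u5"
  "(mmat u1 u2 u3 u4 u5 u6)$4$1 = -2*u4"
  "(mmat u1 u2 u3 u4 u5 u6)$4$2 = 0"
  "(mmat u1 u2 u3 u4 u5 u6)$4$3 = 4*u1"
  "(mmat u1 u2 u3 u4 u5 u6)$4$4 = 0"
  "(mmat u1 u2 u3 u4 u5 u6)$4$5 = 0"
  "(mmat u1 u2 u3 u4 u5 u6)$4$6 = 0"
  "(mmat u1 u2 u3 u4 u5 u6)$5$0 = u6"
  "(mmat u1 u2 u3 u4 u5 u6)$5$1 = 0"
  "(mmat u1 u2 u3 u4 u5 u6)$5$2 = 2*u4"
  "(mmat u1 u2 u3 u4 u5 u6)$5$3 = -4*u2"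
  "(mmat u1 u2 u3 u4 u5 u6)$5$4 = -u3"
  "(mmat u1 u2 u3 u4 u5 u6)$5$5 = 0"
  "(mmat u1 u2 u3 u4 u5 u6)$5$6 = 0"
  "(mmat u1 u2 u3 u4 u5 u6)$6$0 = 0"
  "(mmat u1 u2 u3 u4 u5 u6)$6$1 = -u6"
  "(mmat u1 u2 u3 u4 u5 u6)$6$2 = -u5"
  "(mmat u1 u2 u3 u4 u5 u6)$6$3 = -u4"
  "(mmat u1 u2 u3 u4 u5 u6)$6$4 = -u2"
  "(mmat u1 u2 u3 u4 u5 u6)$6$5 = -u1"
  "(mmat u1 u2 u3 u4 u5 u6)$6$6 = 0"
  by (simp_all add: mmat_def)

lemma rank_cone:
  assumes "rank (mmat u1 u2 u3 u4 u5 u6) \<le> 2"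
  shows "u1 = 0 \<and> cone u2 u3 u4 u5"
proof -
  let ?X = "mmat u1 u2 u3 u4 u5 u6"
  have m1: "u1 * u1 * u1 = 0" using minor_zero[OF assms, of 1 0 2 3 3 4] unfolding mm det3_def by algebra
  hence z1: "u1 = 0" by simp
  have m2: "u4*u4*u4 = 0" if "u2 = 0" using minor_zero[OF assms, of 3 0 2 3 5 6] that z1 unfolding mm det3_def by algebra
  have m3: "u2*(4*u2^2-u3*u4) = 0" using minor_zero[OF assms, of 2 0 1 4 3 6] z1 unfolding mm det3_def by algebra
  have m4: "u2*(u4^2+2*u2*u5) = 0" using minor_zero[OF assms, of 2 0 2 3 5 6] z1 unfolding mm det3_def by algebra
  have m5: "u2*(2*u2*u4+u3*u5) = 0" using minor_zero[OF assms, of 2 0 2 4 5 6] z1 unfolding mm det3_def by algebra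
  have m6: "u3*u3*u5 = 0" if "u2 = 0" "u4 = 0" using minor_zero[OF assms, of 2 1 4 2 5 6] z1 that unfolding mm det3_def by algebra
  show ?thesis
  proof (cases "u2 = 0")
    case True
    with m2 have "u4 = 0" by simp
    with m6 True have "u3 * u5 = 0" by simp
    with True \<open>u4 = 0\<close> z1 show ?thesis by (simp add: cone_def)
  next
    case False
    from m3 m4 m5 False have "4*u2^2-u3*u4 = 0" "u4^2+2*u2*u5 = 0" "2*u2*u4+u3*u5 = 0" by simp_all
    with z1 show ?thesis by (simp add: cone_def algebra_simps)
  qed
qed
lemma prop4:
  fixes a b c d x y z w :: real
  assumes "a \<noteq> 0 \<or> b \<noteq> 0 \<or> c \<noteq> 0 \<or> d \<noteq> 0"
    "a*y = b*x" "a*z = c*x" "a*w = d*x" "b*z = c*y" "b*w = d*y" "c*w = d*z"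
  shows "\<exists>l. x = l*a \<and> y = l*b \<and> z = l*c \<and> w = l*d"
proof -
  { assume "a \<noteq> 0" hence ?thesis using assms by (intro exI[of _ "x/a"]) (auto simp: field_simps) }
  moreover
  { assume "b \<noteq> 0" hence ?thesis using assms by (intro exI[of _ "y/b"]) (auto simp: field_simps) }
  moreover
  { assume "c \<noteq> 0" hence ?thesis using assms by (intro exI[of _ "z/c"]) (auto simp: field_simps) }
  moreover
  { assume "d \<noteq> 0" hence ?thesis using assms by (intro exI[of _ "w/d"]) (auto simp: field_simps) }
  ultimately show ?thesis using assms(1) by blast
qed

lemma mmat_E: "mmat 0 0 0 0 0 c = c *\<^sub>R mmat 0 0 0 0 0 1"
  by (simp add: mmat_def vec_eq_iff)

theorem lemma3p7:
  shows "\<not> (\<exists>B. B \<subseteq> g2_m \<and> is_lie_subalgebra B \<and> dim B = 3 \<and>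
              (\<forall>X\<in>B. X \<noteq> 0 \<longrightarrow> rank X = 2))"
proof
  assume "\<exists>B. B \<subseteq> g2_m \<and> is_lie_subalgebra B \<and> dim B = 3 \<and>
              (\<forall>X\<in>B. X \<noteq> 0 \<longrightarrow> rank X = 2)"
  then obtain B where B: "B \<subseteq> g2_m" "is_lie_subalgebra B" "dim B = 3"
    "\<forall>X\<in>B. X \<noteq> 0 \<longrightarrow> rank X = 2" by blast
  have sub: "subspace B" using B(2) by (simp add: is_lie_subalgebra_def)
  have repr: "X = mmat (X$1$0) (X$2$0) (X$2$1) (X$3$0) (X$4$0) (X$5$0)" if "X \<in> B" for X
  proof -
    from that B(1) obtain u1 u2 u3 u4 u5 u6 where "X = mmat u1 u2 u3 u4 u5 u6"
      unfolding g2_m_def by blast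
    then show ?thesis by (simp add: mm)
  qed
  have cX: "X$1$0 = 0 \<and> cone (X$2$0) (X$2$1) (X$3$0) (X$4$0)" if "X \<in> B" for X
  proof (cases "X = 0")
    case True then show ?thesis by (simp add: cone_def)
  next
    case False
    with B(4) that have "rank X = 2" by blast
    with repr[OF that] have "rank (mmat (X$1$0) (X$2$0) (X$2$1) (X$3$0) (X$4$0) (X$5$0)) \<le> 2" by simp
    from rank_cone[OF this] show ?thesis .
  qed
  have mins: "X$2$0 * Y$2$1 = X$2$1 * Y$2$0 \<and> X$2$0 * Y$3$0 = X$3$0 * Y$2$0 \<and>
     X$2$0 * Y$4$0 = X$4$0 * Y$2$0 \<and> X$2$1 * Y$3$0 = X$3$0 * Y$2$1 \<and>
     X$2$1 * Y$4$0 = X$4$0 * Y$2$1 \<and> X$3$0 * Y$4$0 = X$4$0 * Y$3$0"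
    if "X \<in> B" "Y \<in> B" for X Y
  proof -
    have "X + Y \<in> B" using sub that by (simp add: subspace_add)
    from cX[OF this] cX[OF that(1)] cX[OF that(2)]
    have "cone (X$2$0) (X$2$1) (X$3$0) (X$4$0)" "cone (Y$2$0) (Y$2$1) (Y$3$0) (Y$4$0)"
      "cone (X$2$0 + Y$2$0) (X$2$1 + Y$2$1) (X$3$0 + Y$3$0) (X$4$0 + Y$4$0)" by auto
    from alg[OF this] show ?thesis by simp
  qed
  define E :: "real^7^7" where "E = mmat 0 0 0 0 0 1"
  have Ecoord: "Z = (Z$5$0) *\<^sub>R E" if "Z \<in> B" "Z$2$0 = 0" "Z$2$1 = 0" "Z$3$0 = 0" "Z$4$0 = 0" for Z
    using repr[OF that(1)] cX[OF that(1)] that(2-) by (simp add: E_def mmat_E[symmetric])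
  show False
  proof (cases "\<exists>X0\<in>B. X0$2$0 \<noteq> 0 \<or> X0$2$1 \<noteq> 0 \<or> X0$3$0 \<noteq> 0 \<or> X0$4$0 \<noteq> 0")
    case True
    then obtain X0 where X0: "X0 \<in> B" "X0$2$0 \<noteq> 0 \<or> X0$2$1 \<noteq> 0 \<or> X0$3$0 \<noteq> 0 \<or> X0$4$0 \<noteq> 0" by blast
    have "B \<subseteq> span {X0, E}"
    proof
      fix Y assume Y: "Y \<in> B"
      from prop4[OF X0(2)] mins[OF X0(1) Y] obtain l where
        l: "Y$2$0 = l * X0$2$0" "Y$2$1 = l * X0$2$1" "Y$3$0 = l * X0$3$0" "Y$4$0 = l * X0$4$0" by blast
      define Z where "Z = Y - l *\<^sub>R X0"
      have ZB: "Z \<in> B" unfolding Z_def using sub Y X0(1) by (simp add: subspace_diff subspace_scale)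
      have "Z = (Z$5$0) *\<^sub>R E" by (rule Ecoord[OF ZB]) (simp_all add: Z_def l)
      hence "Y = l *\<^sub>R X0 + (Z$5$0) *\<^sub>R E" unfolding Z_def by (metis diff_add_cancel add.commute)
      then show "Y \<in> span {X0, E}" by (simp add: span_add span_mul span_base)
    qed
    hence "dim B \<le> card {X0, E}" by (rule dim_le_card) simp
    also have "\<dots> \<le> 2" by (simp add: card_insert_le_m1)
    finally show False using B(3) by simp
  next
    case False
    have "B \<subseteq> span {E}"
    proof
      fix Y assume Y: "Y \<in> B"
      with False have "Y = (Y$5$0) *\<^sub>R E" by (intro Ecoord) auto
      then show "Y \<in> span {E}" by (metis span_base span_mul insertI1)
    qed
    hence "dim B \<le> card {E}" by (rule dim_le_card) simp
    then show False using B(3) by simp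
  qed
qed

end
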